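(* Let $0<\alpha\le 2\pi/3$ and let $u,v\in V$ with $(u,v)\in N_\alpha$. Then there is a path $u_0,\dots,u_m$ with $u_0=u$, $u_m=v$ and $\{u_i,u_{i+1}\}\in E^-_\alpha$ for all $i=0,\dots,m-1$.
   Context: Let $V$ be a finite set of pairwise distinct points (nodes) in the Euclidean plane, $d$ the Euclidean distance, and $R>0$. Fix a finite increasing sequence of radius levels $0<r_1<r_2<\dots<r_k=R$. For $u\in V$ and $1\le i\le k$ let $S_i(u)=\{v\in V\setminus\{u\}: d(u,v)\le r_i\}$. For $0<\alpha<2\pi$, a closed cone of width $\alpha$ with apex $u$ is a set $\{u+t(\cos\varphi,\sin\varphi): t\ge 0,\ \varphi\in[\theta-\alpha/2,\theta+\alpha/2]\}$ for some $\theta$. A finite set $S\subseteq V\setminus\{u\}$ has an $\alpha$-gap (at $u$) if some closed cone of width $\alpha$ with apex $u$ contains no node of $S$ (in particular $\emptyset$ has an $\alpha$-gap). The algorithm CBTC($\alpha$) assigns to each $u$ the index $i_u$ = the least $i\in\{1,\dots,k\}$ such that $S_i(u)$ has no $\alpha$-gap, or $i_u=k$ if there is no such $i$; set $N_\alpha(u)=S_{i_u}(u)$ and $N_\alpha=\{(u,v): v\in N_\alpha(u)\}$ (a directed relation, not necessarily symmetric). Let $E^-_\alpha=\{\{u,v\}: (u,v)\in N_\alpha\text{ and }(v,u)\in N_\alpha\}$. *)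

theory Defs
  imports "HOL-Analysis.Analysis"
begin

text \<open>Points of the Euclidean plane are modelled as complex numbers; dist is the Euclidean distance.
  Radius levels r_1 < ... < r_k are given by a function r :: nat => real on indices 1..k.\<close>

definition S_level :: "complex set \<Rightarrow> (nat \<Rightarrow> real) \<Rightarrow> nat \<Rightarrow> complex \<Rightarrow> complex set" where
  "S_level V r i u = {v \<in> V - {u}. dist u v \<le> r i}"

definition cone :: "complex \<Rightarrow> real \<Rightarrow> real \<Rightarrow> complex set" where
  "cone u \<alpha> \<theta> = {u + complex_of_real t * cis \<phi> | t \<phi>.
      t \<ge> 0 \<and> \<theta> - \<alpha>/2 \<le> \<phi> \<and> \<phi> \<le> \<theta> + \<alpha>/2}"

definition has_gap :: "complex \<Rightarrow> real \<Rightarrow> complex set \<Rightarrow> bool" where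
  "has_gap u \<alpha> S \<longleftrightarrow> (\<exists>\<theta>. cone u \<alpha> \<theta> \<inter> S = {})"

definition cbtc_index :: "complex set \<Rightarrow> (nat \<Rightarrow> real) \<Rightarrow> nat \<Rightarrow> real \<Rightarrow> complex \<Rightarrow> nat" where
  "cbtc_index V r k \<alpha> u =
     (if \<exists>i\<in>{1..k}. \<not> has_gap u \<alpha> (S_level V r i u)
      then (LEAST i. i \<in> {1..k} \<and> \<not> has_gap u \<alpha> (S_level V r i u))
      else k)"

definition N_cbtc :: "complex set \<Rightarrow> (nat \<Rightarrow> real) \<Rightarrow> nat \<Rightarrow> real \<Rightarrow> complex \<Rightarrow> complex set" where
  "N_cbtc V r k \<alpha> u = S_level V r (cbtc_index V r k \<alpha> u) u"

definition N_rel :: "complex set \<Rightarrow> (nat \<Rightarrow> real) \<Rightarrow> nat \<Rightarrow> real \<Rightarrow> (complex \<times> complex) set" where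
  "N_rel V r k \<alpha> = {(u, v). u \<in> V \<and> v \<in> N_cbtc V r k \<alpha> u}"

definition E_minus :: "complex set \<Rightarrow> (nat \<Rightarrow> real) \<Rightarrow> nat \<Rightarrow> real \<Rightarrow> complex set set" where
  "E_minus V r k \<alpha> = {{u, v} | u v. (u, v) \<in> N_rel V r k \<alpha> \<and> (v, u) \<in> N_rel V r k \<alpha>}"

end

theory Submission imports Defs begin

lemma geo:
  fixes a b w :: complex and t \<phi> :: real
  assumes "w = b + complex_of_real t * cis \<phi>" "t > 0" "\<bar>\<phi> - Arg (a - b)\<bar> \<le> pi/3"
    "t < dist a b"
  shows "dist a w < dist a b"
proof -
  define d where "d = cmod (a - b)"
  define \<theta> where "\<theta> = Arg (a - b)"
  have ab: "a - b = complex_of_real d * cis \<theta>"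
    using rcis_cmod_Arg[of "a-b"] by (simp add: rcis_def d_def \<theta>_def)
  have tl: "t < d" using assms(4) by (simp add: d_def dist_norm)
  have c: "cos (\<phi> - \<theta>) \<ge> 1/2"
  proof -
    have h1: "\<bar>\<phi> - \<theta>\<bar> \<le> pi/3" using assms(3) by (simp add: \<theta>_def)
    have h2: "\<bar>\<phi> - \<theta>\<bar> \<le> pi" using h1 pi_gt_zero by linarith
    have "cos (pi/3) \<le> cos \<bar>\<phi> - \<theta>\<bar>"
      using cos_mono_le_eq[of "pi/3" "\<bar>\<phi> - \<theta>\<bar>"] h1 h2 pi_gt_zero by simp
    then show ?thesis by (simp add: cos_60)
  qed
  have "a - w = complex_of_real d * cis \<theta> - complex_of_real t * cis \<phi>"
    using ab assms(1) by (simp add: algebra_simps)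
  hence "(dist a w)^2 = (d * cos \<theta> - t * cos \<phi>)^2 + (d * sin \<theta> - t * sin \<phi>)^2"
    by (simp add: dist_norm cmod_power2)
  also have "\<dots> = d^2 * ((cos \<theta>)^2 + (sin \<theta>)^2) + t^2 * ((cos \<phi>)^2 + (sin \<phi>)^2)
     - 2*d*t*(cos \<phi> * cos \<theta> + sin \<phi> * sin \<theta>)"
    by (simp add: power2_diff power_mult_distrib cos_squared_eq algebra_simps)
  also have "\<dots> = d^2 + t^2 - 2*d*t*cos (\<phi> - \<theta>)"
    by (simp only: cos_diff sin_cos_squared_add2 mult_1_right)
  also have "\<dots> \<le> d^2 + t^2 - d*t"
  proof -
    have "d * t * 1 \<le> d*t*(2 * cos (\<phi> - \<theta>))"
      using c tl assms(2) by (intro mult_left_mono) auto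
    then show ?thesis by simp
  qed
  also have "\<dots> = d^2 + t * (t - d)" by (simp add: power2_eq_square algebra_simps)
  also have "\<dots> < d^2" using tl assms(2) mult_pos_neg[of t "t - d"] by simp
  finally have "(dist a w)^2 < (dist a b)^2" by (simp add: d_def dist_norm)
  thus ?thesis by (simp add: power_less_imp_less_base)
qed

lemma path_of_rtranclp:
  assumes "(\<lambda>x y. {x, y} \<in> E)\<^sup>*\<^sup>* a b"
  shows "\<exists>ps. ps \<noteq> [] \<and> hd ps = a \<and> last ps = b \<and>
           (\<forall>i. i + 1 < length ps \<longrightarrow> {ps ! i, ps ! (i + 1)} \<in> E)"
  using assms
proof (induction rule: converse_rtranclp_induct)
  case base
  then show ?case by (intro exI[of _ "[b]"]) auto
next
  case (step a c)
  then obtain ps where ps: "ps \<noteq> []" "hd ps = c" "last ps = b"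
    "\<forall>i. i + 1 < length ps \<longrightarrow> {ps ! i, ps ! (i + 1)} \<in> E" by blast
  show ?case
  proof (intro exI[of _ "a # ps"] conjI allI impI)
    fix i assume "i + 1 < length (a # ps)"
    then show "{(a # ps) ! i, (a # ps) ! (i + 1)} \<in> E"
      using ps step(1) by (cases i) (auto simp: hd_conv_nth)
  qed (use ps in auto)
qed

lemma rtranclp_sym_edge:
  assumes "(\<lambda>x y. {x, y} \<in> E)\<^sup>*\<^sup>* a b"
  shows "(\<lambda>x y. {x, y} \<in> E)\<^sup>*\<^sup>* b a"
  using assms
proof (induction rule: rtranclp_induct)
  case base then show ?case by simp
next
  case (step c d)
  have "{d, c} \<in> E" using step(2) by (simp add: insert_commute)
  then show ?case using step(3) by (simp add: converse_rtranclp_into_rtranclp)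
qed

theorem lemma3:
  fixes V :: "complex set" and r :: "nat \<Rightarrow> real" and k :: nat and \<alpha> :: real
    and u v :: complex
  assumes "finite V"
    and "k \<ge> 1"
    and "0 < r 1"
    and "\<forall>i j. 1 \<le> i \<longrightarrow> i < j \<longrightarrow> j \<le> k \<longrightarrow> r i < r j"
    and "0 < \<alpha>" and "\<alpha> \<le> 2 * pi / 3"
    and "u \<in> V" and "v \<in> V"
    and "(u, v) \<in> N_rel V r k \<alpha>"
  shows "\<exists>ps :: complex list. ps \<noteq> [] \<and> hd ps = u \<and> last ps = v \<and>
           (\<forall>i. i + 1 < length ps \<longrightarrow> {ps ! i, ps ! (i + 1)} \<in> E_minus V r k \<alpha>)"
proof -
  define N where "N = N_rel V r k \<alpha>"
  define E where "E = E_minus V r k \<alpha>"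
  define R where "R = (\<lambda>x y. {x, y} \<in> E)"
  define idx where "idx = cbtc_index V r k \<alpha>"
  define f where "f = (\<lambda>p :: complex \<times> complex. card {q \<in> N. dist (fst q) (snd q) < dist (fst p) (snd p)})"
  have finN: "finite N"
  proof -
    have "N \<subseteq> V \<times> V" by (auto simp: N_def N_rel_def N_cbtc_def S_level_def)
    then show ?thesis using assms(1) finite_subset by blast
  qed
  have idx_range: "idx x \<in> {1..k}" for x
  proof (cases "\<exists>i\<in>{1..k}. \<not> has_gap x \<alpha> (S_level V r i x)")
    case True
    then have "\<exists>i. i \<in> {1..k} \<and> \<not> has_gap x \<alpha> (S_level V r i x)" by blast
    then have "(LEAST i. i \<in> {1..k} \<and> \<not> has_gap x \<alpha> (S_level V r i x)) \<in> {1..k}"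
      by (rule LeastI2_ex) auto
    then show ?thesis using True by (simp add: idx_def cbtc_index_def)
  next
    case False
    then show ?thesis using assms(2) by (simp add: idx_def cbtc_index_def)
  qed
  have mono: "r i \<le> r j" if "1 \<le> i" "i \<le> j" "j \<le> k" for i j
    using assms(4) that by (cases "i = j") (auto, meson less_eq_real_def nat_less_le)
  have inN: "(x, y) \<in> N \<longleftrightarrow> x \<in> V \<and> y \<in> V \<and> y \<noteq> x \<and> dist x y \<le> r (idx x)" for x y
    by (auto simp: N_def N_rel_def N_cbtc_def S_level_def idx_def)
  have key: "\<exists>w. (a, w) \<in> N \<and> (b, w) \<in> N \<and> dist a w < dist a b \<and> dist b w < dist a b"
    if ab: "(a, b) \<in> N" "(b, a) \<notin> N" for a b
  proof -
    have a: "a \<in> V" "b \<in> V" "b \<noteq> a" "dist a b \<le> r (idx a)" using ab(1) inN by auto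
    have lt: "r (idx b) < dist a b" using ab(2) a inN by (auto simp: dist_commute)
    have "r (idx a) \<le> r k" using idx_range[of a] mono by auto
    then have ltk: "r (idx b) < r k" using lt a by linarith
    have ex: "\<exists>i\<in>{1..k}. \<not> has_gap b \<alpha> (S_level V r i b)"
    proof (rule ccontr)
      assume "\<not> ?thesis"
      then have "idx b = k" by (simp add: idx_def cbtc_index_def)
      then show False using ltk by simp
    qed
    then have "\<exists>i. i \<in> {1..k} \<and> \<not> has_gap b \<alpha> (S_level V r i b)" by blast
    then have "\<not> has_gap b \<alpha> (S_level V r (LEAST i. i \<in> {1..k} \<and> \<not> has_gap b \<alpha> (S_level V r i b)) b)"
      by (rule LeastI2_ex) auto
    then have ng: "\<not> has_gap b \<alpha> (S_level V r (idx b) b)" using ex by (simp add: idx_def cbtc_index_def)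
    then have "cone b \<alpha> (Arg (a - b)) \<inter> S_level V r (idx b) b \<noteq> {}"
      unfolding has_gap_def by blast
    then obtain w where w1: "w \<in> cone b \<alpha> (Arg (a - b))" and w2: "w \<in> S_level V r (idx b) b" by blast
    from w1 obtain t \<phi> where tp: "w = b + complex_of_real t * cis \<phi>" "t \<ge> 0"
      "Arg (a - b) - \<alpha>/2 \<le> \<phi>" "\<phi> \<le> Arg (a - b) + \<alpha>/2"
      unfolding cone_def by blast
    have w3: "w \<in> V" "w \<noteq> b" "dist b w \<le> r (idx b)" using w2 by (auto simp: S_level_def)
    have tw: "dist b w = t" using tp(1,2) by (simp add: dist_norm norm_mult)
    have t0: "t > 0" using tw w3(2) tp(2) by auto
    have ang: "\<bar>\<phi> - Arg (a - b)\<bar> \<le> pi/3" using tp(3,4) assms(6) unfolding abs_le_iff by linarith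
    have dbw: "dist b w < dist a b" using w3(3) lt by linarith
    have daw: "dist a w < dist a b"
      using geo[OF tp(1) t0 ang] dbw tw by simp
    have "w \<noteq> a" using dbw by (auto simp: dist_commute)
    then have "(a, w) \<in> N" using a w3 daw inN by auto
    moreover have "(b, w) \<in> N" using a w3 inN by auto
    ultimately show ?thesis using daw dbw by blast
  qed
  have main: "p \<in> N \<longrightarrow> R\<^sup>*\<^sup>* (fst p) (snd p)" for p
  proof (induct p taking: f rule: measure_induct_rule)
    case (less p)
    obtain a b where p: "p = (a, b)" by fastforce
    show ?case
    proof
      assume pN: "p \<in> N"
      show "R\<^sup>*\<^sup>* (fst p) (snd p)"
      proof (cases "(b, a) \<in> N")
        case True
        then have "{a, b} \<in> E" using pN p by (auto simp: E_def E_minus_def N_def)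
        then show ?thesis using p by (simp add: R_def r_into_rtranclp)
      next
        case False
        obtain w where w: "(a, w) \<in> N" "(b, w) \<in> N" "dist a w < dist a b" "dist b w < dist a b"
          using key[OF pN[unfolded p] False] by blast
        have smaller: "f (x, y) < f p" if "(x, y) \<in> N" "dist x y < dist a b" for x y
        proof -
          have "{q \<in> N. dist (fst q) (snd q) < dist x y} \<subset> {q \<in> N. dist (fst q) (snd q) < dist a b}"
          proof
            show "{q \<in> N. dist (fst q) (snd q) < dist x y} \<subseteq> {q \<in> N. dist (fst q) (snd q) < dist a b}"
              using that by auto
            have "(x, y) \<notin> {q \<in> N. dist (fst q) (snd q) < dist x y}" by simp
            moreover have "(x, y) \<in> {q \<in> N. dist (fst q) (snd q) < dist a b}" using that by simp
            ultimately show "{q \<in> N. dist (fst q) (snd q) < dist x y} \<noteq> {q \<in> N. dist (fst q) (snd q) < dist a b}"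
              by blast
          qed
          then show ?thesis unfolding f_def p using finN
            by (intro psubset_card_mono) auto
        qed
        have "R\<^sup>*\<^sup>* a w" using less[of "(a, w)"] smaller[OF w(1) w(3)] w(1) by simp
        moreover have "R\<^sup>*\<^sup>* b w" using less[of "(b, w)"] smaller[OF w(2) w(4)] w(2) by simp
        then have "R\<^sup>*\<^sup>* w b" unfolding R_def by (rule rtranclp_sym_edge)
        ultimately show ?thesis using p by simp
      qed
    qed
  qed
  have "R\<^sup>*\<^sup>* u v" using main[of "(u, v)"] assms(9) by (simp add: N_def)
  then show ?thesis unfolding R_def E_def by (rule path_of_rtranclp)
qed

end
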